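(* Let $p\leq q$, let $0\leq a_1\leq\dots\leq a_p$, and let $L(s)=L_a(s)$ be an H-curve in $\mathrm{Gr}_{p,q}$ with invariants $a_1,\dots,a_p$. Let $s_1<s_2<s_3$ be such that the points $L(s_1),L(s_2),L(s_3)$ are pairwise sufficiently near on this curve. Then for all $j=1,\dots,p$, $$\Psi_j[L(s_1),L(s_2)]+\Psi_j[L(s_2),L(s_3)]=\Psi_j[L(s_1),L(s_3)].$$
   Context: $\mathrm{Gr}_{p,q}$ is the set of $p$-dimensional linear subspaces of $\mathbb{R}^{p+q}$ with the standard scalar product. Jordan angles: for $L,M\in\mathrm{Gr}_{p,q}$ with orthonormal bases $e_i$ of $L$, $f_j$ of $M$, let $\lambda_1\geq\dots\geq\lambda_p$ be the singular values of $(\langle e_i,f_j\rangle)$ and $\Psi_j[L,M]=\arccos\lambda_j$. H-curve: given $0\leq a_1\leq\dots\leq a_p$ and an orthonormal basis $e_1,\dots,e_p,f_1,\dots,f_p,r_1,\dots,r_{q-p}$ of $\mathbb{R}^{p+q}$, $L_a(s)$ is the span of $v_j(s)=\cos(a_js)e_j+\sin(a_js)f_j$, $j=1,\dots,p$; the $a_j$ are the invariants of the curve. Points $L_a(s),L_a(t)$ are sufficiently near if $a_p|s-t|\leq\pi/2$. *)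

theory Defs
  imports "HOL-Analysis.Analysis"
begin

definition orthonormal_basis_of :: "nat \<Rightarrow> (real ^ 'n) set \<Rightarrow> (nat \<Rightarrow> real ^ 'n) \<Rightarrow> bool" where
  "orthonormal_basis_of k L e \<longleftrightarrow>
     (\<forall>i<k. \<forall>j<k. e i \<bullet> e j = (if i = j then 1 else 0)) \<and> span (e ` {..<k}) = L"

text \<open>The Grassmannian Gr_{p,q}: p-dimensional linear subspaces of R^(p+q) (here real^'n, CARD('n) = p+q).\<close>
definition Gr :: "nat \<Rightarrow> (real ^ 'n) set set" where
  "Gr p = {L. subspace L \<and> dim L = p}"

definition is_singular_values :: "nat \<Rightarrow> (nat \<Rightarrow> nat \<Rightarrow> real) \<Rightarrow> (nat \<Rightarrow> real) \<Rightarrow> bool" where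
  "is_singular_values k A \<sigma> \<longleftrightarrow>
     (\<forall>i<k. 0 \<le> \<sigma> i) \<and> (\<forall>i j. i < j \<and> j < k \<longrightarrow> \<sigma> j \<le> \<sigma> i) \<and> (\<forall>i\<ge>k. \<sigma> i = 0) \<and>
     (\<exists>U V. (\<forall>i<k. \<forall>j<k. (\<Sum>l<k. U l i * U l j) = (if i = j then 1 else 0)) \<and>
            (\<forall>i<k. \<forall>j<k. (\<Sum>l<k. V l i * V l j) = (if i = j then 1 else 0)) \<and>
            (\<forall>i<k. \<forall>j<k. A i j = (\<Sum>l<k. U i l * \<sigma> l * V j l)))"

definition singular_values :: "nat \<Rightarrow> (nat \<Rightarrow> nat \<Rightarrow> real) \<Rightarrow> nat \<Rightarrow> real" where
  "singular_values k A = (THE \<sigma>. is_singular_values k A \<sigma>)"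

text \<open>Jordan angle Psi_j[L,M] for j = 1..p (1-based), computed from (arbitrarily chosen)
  orthonormal bases of L and M: arccos of the j-th largest singular value of (<e_i, f_j>).\<close>
definition jordan_angle :: "nat \<Rightarrow> nat \<Rightarrow> (real ^ 'n) set \<Rightarrow> (real ^ 'n) set \<Rightarrow> real" where
  "jordan_angle p j L M =
     (let e = (SOME e. orthonormal_basis_of p L e);
          f = (SOME f. orthonormal_basis_of p M f)
      in arccos (singular_values p (\<lambda>i l. e i \<bullet> f l) (j - 1)))"

text \<open>The family e_1..e_p, f_1..f_p, r_1..r_(q-p), enumerated as b 1, ..., b (p+q).\<close>
definition frame_fam :: "nat \<Rightarrow> (nat \<Rightarrow> real ^ 'n) \<Rightarrow> (nat \<Rightarrow> real ^ 'n) \<Rightarrow> (nat \<Rightarrow> real ^ 'n) \<Rightarrow> nat \<Rightarrow> real ^ 'n" where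
  "frame_fam p e f r k = (if k \<le> p then e k else if k \<le> 2 * p then f (k - p) else r (k - 2 * p))"

definition is_orthonormal_frame :: "nat \<Rightarrow> nat \<Rightarrow> (nat \<Rightarrow> real ^ 'n) \<Rightarrow> (nat \<Rightarrow> real ^ 'n) \<Rightarrow> (nat \<Rightarrow> real ^ 'n) \<Rightarrow> bool" where
  "is_orthonormal_frame p q e f r \<longleftrightarrow>
     (\<forall>i\<in>{1..p+q}. \<forall>j\<in>{1..p+q}. frame_fam p e f r i \<bullet> frame_fam p e f r j = (if i = j then 1 else 0)) \<and>
     span (frame_fam p e f r ` {1..p+q}) = UNIV"

definition H_curve :: "nat \<Rightarrow> (nat \<Rightarrow> real) \<Rightarrow> (nat \<Rightarrow> real ^ 'n) \<Rightarrow> (nat \<Rightarrow> real ^ 'n) \<Rightarrow> real \<Rightarrow> (real ^ 'n) set" where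
  "H_curve p a e f s = span ((\<lambda>j. cos (a j * s) *\<^sub>R e j + sin (a j * s) *\<^sub>R f j) ` {1..p})"

definition sufficiently_near :: "nat \<Rightarrow> (nat \<Rightarrow> real) \<Rightarrow> real \<Rightarrow> real \<Rightarrow> bool" where
  "sufficiently_near p a s t \<longleftrightarrow> a p * \<bar>s - t\<bar> \<le> pi / 2"

end

theory Submission
  imports Defs "Jordan_Normal_Form.Char_Poly"
begin


lemma order_prod_linear:
  "order c (\<Prod>x\<leftarrow>xs. [:-x, 1:]) = count (mset xs) (c::real)"
proof (induction xs)
  case Nil
  then show ?case by (simp add: order_0I)
next
  case (Cons x xs)
  have nz: "(\<Prod>x\<leftarrow>xs. [:-x, 1:]) \<noteq> (0::real poly)"
    by (auto simp: prod_list_zero_iff)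
  have lin: "[:-x,1:] \<noteq> (0::real poly)" by simp
  have "[:-x,1:] * (\<Prod>x\<leftarrow>xs. [:-x, 1:]) \<noteq> 0" using nz lin no_zero_divisors by blast
  hence "order c (\<Prod>x\<leftarrow>x#xs. [:-x, 1:]) = order c [:-x,1:] + order c (\<Prod>x\<leftarrow>xs. [:-x, 1:])"
    by (simp only: list.map prod_list.Cons) (erule order_mult)
  also have "\<dots> = (if x = c then 1 else 0) + count (mset xs) c"
    using Cons.IH order_linear'[of c "-x"] by simp
  finally show ?case by simp
qed

lemma prod_linear_eq_mset:
  assumes "(\<Prod>x\<leftarrow>xs. [:-x, 1:]) = (\<Prod>x\<leftarrow>ys. [:-x, 1:] :: real poly)"
  shows "mset xs = mset ys"
  by (rule multiset_eqI) (metis assms order_prod_linear)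

lemma t1: fixes U :: "nat \<Rightarrow> nat \<Rightarrow> real"
  assumes hU: "\<forall>i<k. \<forall>j<k. (\<Sum>l<k. U l i * U l j) = (if i = j then 1 else 0)"
  shows "transpose_mat (Matrix.mat k k (\<lambda>(i,j). U i j)) * Matrix.mat k k (\<lambda>(i,j). U i j) = 1\<^sub>m k"
proof (rule eq_matI)
  fix i j assume ij: "i < dim_row (1\<^sub>m k)" "j < dim_col (1\<^sub>m k)"
  have "(transpose_mat (Matrix.mat k k (\<lambda>(i,j). U i j)) * Matrix.mat k k (\<lambda>(i,j). U i j)) $$ (i,j)
     = (\<Sum>l<k. U l i * U l j)"
    using ij by (simp add: scalar_prod_def atLeast0LessThan)
  then show "(transpose_mat (Matrix.mat k k (\<lambda>(i,j). U i j)) * Matrix.mat k k (\<lambda>(i,j). U i j)) $$ (i,j) = 1\<^sub>m k $$ (i,j)"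
    using ij hU by simp
qed auto

lemma diag_mult_left:
  assumes "M \<in> carrier_mat k n" "i < k" "j < n"
  shows "(Matrix.mat k k (\<lambda>(i,j). if i = j then (\<sigma> i::real) else 0) * M) $$ (i,j) = \<sigma> i * M $$ (i,j)"
proof -
  have "(Matrix.mat k k (\<lambda>(i,j). if i = j then (\<sigma> i::real) else 0) * M) $$ (i,j)
     = (\<Sum>l\<in>{0..<k}. (if i = l then \<sigma> i else 0) * M $$ (l,j))"
    using assms by (auto simp: scalar_prod_def intro!: sum.cong)
  also have "\<dots> = (\<Sum>l\<in>{0..<k}. if i = l then \<sigma> i * M $$ (l,j) else 0)"
    by (rule sum.cong) auto
  also have "\<dots> = \<sigma> i * M $$ (i,j)" using assms by (simp add: sum.delta)
  finally show ?thesis .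
qed

lemma svd_char_poly:
  assumes "is_singular_values k A \<sigma>"
  shows "char_poly (transpose_mat (Matrix.mat k k (\<lambda>(i,j). A i j)) * Matrix.mat k k (\<lambda>(i,j). A i j))
     = (\<Prod>l\<leftarrow>[0..<k]. [:-((\<sigma> l)^2), 1:])"
proof -
  define Am where "Am = Matrix.mat k k (\<lambda>(i,j). A i j)"
  have "\<exists>U V. (\<forall>i<k. \<forall>j<k. (\<Sum>l<k. U l i * U l j) = (if i = j then 1 else 0)) \<and>
            (\<forall>i<k. \<forall>j<k. (\<Sum>l<k. V l i * V l j) = (if i = j then 1 else 0)) \<and>
            (\<forall>i<k. \<forall>j<k. A i j = (\<Sum>l<k. U i l * \<sigma> l * V j l))"
    using assms unfolding is_singular_values_def by (elim conjE) assumption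
  then obtain U V where
    hU: "\<forall>i<k. \<forall>j<k. (\<Sum>l<k. U l i * U l j) = (if i = j then 1 else 0)" and
    hV: "\<forall>i<k. \<forall>j<k. (\<Sum>l<k. V l i * V l j) = (if i = j then 1 else 0)" and
    hA: "\<forall>i<k. \<forall>j<k. A i j = (\<Sum>l<k. U i l * \<sigma> l * V j l)"
    by blast
  define Um where "Um = Matrix.mat k k (\<lambda>(i,j). U i j)"
  define Vm where "Vm = Matrix.mat k k (\<lambda>(i,j). V i j)"
  define Dm where "Dm = Matrix.mat k k (\<lambda>(i,j). if i = j then \<sigma> i else 0)"
  define D2 where "D2 = Matrix.mat k k (\<lambda>(i,j). if i = j then (\<sigma> i)^2 else 0)"
  define Wm where "Wm = Dm * transpose_mat Vm"
  have c: "Am \<in> carrier_mat k k" "Um \<in> carrier_mat k k" "Vm \<in> carrier_mat k k"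
     "Dm \<in> carrier_mat k k" "D2 \<in> carrier_mat k k" "Wm \<in> carrier_mat k k"
    by (auto simp: Am_def Um_def Vm_def Dm_def D2_def Wm_def)
  have UtU: "transpose_mat Um * Um = 1\<^sub>m k"
    unfolding Um_def by (rule t1[OF hU])
  have VtV: "transpose_mat Vm * Vm = 1\<^sub>m k"
    unfolding Vm_def by (rule t1[OF hV])
  have VVt: "Vm * transpose_mat Vm = 1\<^sub>m k"
    by (rule mat_mult_left_right_inverse[OF _ _ VtV]) (use c in auto)
  have DD: "Dm * Dm = D2"
  proof (rule eq_matI)
    fix i j assume ij: "i < dim_row D2" "j < dim_col D2"
    then show "(Dm * Dm) $$ (i,j) = D2 $$ (i,j)"
      using diag_mult_left[of Dm k k i j \<sigma>] c by (simp add: Dm_def D2_def power2_eq_square)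
  qed (use c in auto)
  have W: "Wm $$ (l,j) = \<sigma> l * V j l" if "l < k" "j < k" for l j
    using diag_mult_left[of "transpose_mat Vm" k k l j \<sigma>] c that by (simp add: Wm_def Dm_def Vm_def)
  have hAm: "Am = Um * Wm"
  proof (rule eq_matI)
    fix i j assume ij: "i < dim_row (Um * Wm)" "j < dim_col (Um * Wm)"
    hence ij': "i < k" "j < k" using c by auto
    have "(Um * Wm) $$ (i,j) = (\<Sum>l\<in>{0..<k}. U i l * Wm $$ (l,j))"
      using ij' c by (auto simp: scalar_prod_def Um_def intro!: sum.cong)
    also have "\<dots> = (\<Sum>l<k. U i l * \<sigma> l * V j l)"
      using ij' W by (auto simp: atLeast0LessThan intro!: sum.cong)
    also have "\<dots> = Am $$ (i,j)" using ij' hA by (simp add: Am_def)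
    finally show "Am $$ (i,j) = (Um * Wm) $$ (i,j)" by simp
  qed (use c in auto)
  have DtD: "transpose_mat Dm = Dm"
    by (rule eq_matI) (auto simp: Dm_def)
  have cVt: "transpose_mat Vm \<in> carrier_mat k k" and cUt: "transpose_mat Um \<in> carrier_mat k k"
    and cWt: "transpose_mat Wm \<in> carrier_mat k k" using c by auto
  have tW: "transpose_mat Wm = Vm * Dm"
    unfolding Wm_def transpose_mult[OF c(4) cVt] transpose_transpose DtD ..
  have tA: "transpose_mat Am = transpose_mat Wm * transpose_mat Um"
    unfolding hAm by (rule transpose_mult[OF c(2) c(6)])
  have "transpose_mat Am * Am = transpose_mat Wm * (transpose_mat Um * (Um * Wm))"
    unfolding tA by (subst hAm) (rule assoc_mult_mat[OF cWt cUt mult_carrier_mat[OF c(2) c(6)]])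
  also have "transpose_mat Um * (Um * Wm) = (transpose_mat Um * Um) * Wm"
    by (rule assoc_mult_mat[OF cUt c(2) c(6), symmetric])
  also have "\<dots> = Wm" unfolding UtU using c(6) by (rule left_mult_one_mat)
  also have "transpose_mat Wm * Wm = Vm * (Dm * (Dm * transpose_mat Vm))"
    unfolding tW by (subst Wm_def) (rule assoc_mult_mat[OF c(3) c(4) mult_carrier_mat[OF c(4) cVt]])
  also have "Dm * (Dm * transpose_mat Vm) = (Dm * Dm) * transpose_mat Vm"
    by (rule assoc_mult_mat[OF c(4) c(4) cVt, symmetric])
  also have "Vm * ((Dm * Dm) * transpose_mat Vm) = Vm * (Dm * Dm) * transpose_mat Vm"
    by (rule assoc_mult_mat[OF c(3) mult_carrier_mat[OF c(4) c(4)] cVt, symmetric])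
  finally have AA: "transpose_mat Am * Am = Vm * D2 * transpose_mat Vm" unfolding DD .
  hence sim: "similar_mat (transpose_mat Am * Am) D2"
    by (intro similar_matI[of _ _ Vm "transpose_mat Vm" k]) (use c VVt VtV in auto)
  have ut: "upper_triangular D2" by (auto simp: upper_triangular_def D2_def)
  have "char_poly (transpose_mat Am * Am) = char_poly D2" by (rule char_poly_similar[OF sim])
  also have "\<dots> = (\<Prod>a\<leftarrow>diag_mat D2. [:- a, 1:])" by (rule char_poly_upper_triangular[OF c(5) ut])
  also have "diag_mat D2 = map (\<lambda>l. (\<sigma> l)^2) [0..<k]"
    by (auto simp: diag_mat_def D2_def)
  finally show ?thesis by (simp add: Am_def o_def)
qed

lemma sv_sorted:
  assumes "is_singular_values k A \<sigma>"
  shows "sorted (map (\<lambda>l. - ((\<sigma> l)^2)) [0..<k])"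
proof -
  have h: "\<sigma> j \<le> \<sigma> i" "0 \<le> \<sigma> j" if "i < j" "j < k" for i j
    using assms that unfolding is_singular_values_def by auto
  show ?thesis
    unfolding sorted_iff_nth_mono_less
    by (auto intro!: power_mono h)
qed

lemma sv_unique:
  assumes "is_singular_values k A \<sigma>" "is_singular_values k A \<tau>"
  shows "\<sigma> = \<tau>"
proof
  fix l
  have "mset (map (\<lambda>l. (\<sigma> l)^2) [0..<k]) = mset (map (\<lambda>l. (\<tau> l)^2) [0..<k])"
    apply (rule prod_linear_eq_mset)
    using svd_char_poly[OF assms(1)] svd_char_poly[OF assms(2)] by (simp add: o_def)
  hence "mset (map uminus (map (\<lambda>l. (\<sigma> l)^2) [0..<k])) = mset (map uminus (map (\<lambda>l. (\<tau> l)^2) [0..<k]))"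
    by (simp only: mset_map)
  hence m: "mset (map (\<lambda>l. - ((\<sigma> l)^2)) [0..<k]) = mset (map (\<lambda>l. - ((\<tau> l)^2)) [0..<k])"
    by (simp add: o_def)
  have eq: "map (\<lambda>l. - ((\<sigma> l)^2)) [0..<k] = map (\<lambda>l. - ((\<tau> l)^2)) [0..<k]"
    using properties_for_sort[OF m sv_sorted[OF assms(1)]] sorted_sort_id[OF sv_sorted[OF assms(2)]]
    by simp
  show "\<sigma> l = \<tau> l"
  proof (cases "l < k")
    case True
    have "(\<sigma> l)^2 = (\<tau> l)^2" using arg_cong[OF eq, of "\<lambda>xs. xs ! l"] True by simp
    moreover have "0 \<le> \<sigma> l" "0 \<le> \<tau> l" using assms True unfolding is_singular_values_def by auto
    ultimately show ?thesis by simp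
  next
    case False
    then show ?thesis using assms unfolding is_singular_values_def by auto
  qed
qed

lemma singular_values_eq:
  assumes "is_singular_values k A \<sigma>"
  shows "singular_values k A = \<sigma>"
  unfolding singular_values_def using assms sv_unique by blast



no_notation Matrix.scalar_prod (infix \<open>\<bullet>\<close> 70)

lemma ortho_expand:
  fixes E :: "nat \<Rightarrow> 'a::real_inner"
  assumes on: "\<forall>i<k. \<forall>j<k. E i \<bullet> E j = (if i = j then 1 else 0)"
    and x: "x \<in> span (E ` {..<k})"
  shows "x = (\<Sum>i<k. (x \<bullet> E i) *\<^sub>R E i)"
proof (rule span_induct[OF x, where P="\<lambda>x. x = (\<Sum>i<k. (x \<bullet> E i) *\<^sub>R E i)"])
  show "subspace {x. x = (\<Sum>i<k. (x \<bullet> E i) *\<^sub>R E i)}"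
    unfolding subspace_def
  proof (intro conjI ballI allI)
    fix x y assume "x \<in> {x. x = (\<Sum>i<k. (x \<bullet> E i) *\<^sub>R E i)}" "y \<in> {x. x = (\<Sum>i<k. (x \<bullet> E i) *\<^sub>R E i)}"
    hence hx: "x = (\<Sum>i<k. (x \<bullet> E i) *\<^sub>R E i)" and hy: "y = (\<Sum>i<k. (y \<bullet> E i) *\<^sub>R E i)" by auto
    have "(\<Sum>i<k. ((x + y) \<bullet> E i) *\<^sub>R E i) = (\<Sum>i<k. (x \<bullet> E i) *\<^sub>R E i) + (\<Sum>i<k. (y \<bullet> E i) *\<^sub>R E i)"
      by (simp add: inner_add_left scaleR_add_left sum.distrib)
    then show "x + y \<in> {x. x = (\<Sum>i<k. (x \<bullet> E i) *\<^sub>R E i)}" using hx hy by simp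
  next
    fix c :: real and x assume "x \<in> {x. x = (\<Sum>i<k. (x \<bullet> E i) *\<^sub>R E i)}"
    hence hx: "x = (\<Sum>i<k. (x \<bullet> E i) *\<^sub>R E i)" by auto
    have "(\<Sum>i<k. ((c *\<^sub>R x) \<bullet> E i) *\<^sub>R E i) = c *\<^sub>R (\<Sum>i<k. (x \<bullet> E i) *\<^sub>R E i)"
      by (simp add: scaleR_sum_right)
    then show "c *\<^sub>R x \<in> {x. x = (\<Sum>i<k. (x \<bullet> E i) *\<^sub>R E i)}" using hx by simp
  qed simp
next
  fix y assume "y \<in> E ` {..<k}"
  then obtain m where m: "m < k" "y = E m" by auto
  have "(\<Sum>i<k. (E m \<bullet> E i) *\<^sub>R E i) = (\<Sum>i<k. if m = i then E i else 0)"
    by (rule sum.cong) (use on m in auto)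
  also have "\<dots> = E m" using m by (simp add: sum.delta)
  finally show "y = (\<Sum>i<k. (y \<bullet> E i) *\<^sub>R E i)" using m by simp
qed

lemma hcurve_sv:
  fixes e f E F :: "nat \<Rightarrow> real ^ 'n" and a :: "nat \<Rightarrow> real"
  assumes ef: "\<forall>i\<in>{1..p}. \<forall>j\<in>{1..p}. e i \<bullet> e j = (if i = j then 1 else 0) \<and>
                  f i \<bullet> f j = (if i = j then 1 else 0) \<and> e i \<bullet> f j = 0"
    and E: "orthonormal_basis_of p (H_curve p a e f s) E"
    and F: "orthonormal_basis_of p (H_curve p a e f t) F"
    and rng: "\<forall>l<p. 0 \<le> a (Suc l) * (t - s) \<and> a (Suc l) * (t - s) \<le> pi / 2"
    and mono: "\<forall>i j. i < j \<longrightarrow> j < p \<longrightarrow> a (Suc i) * (t - s) \<le> a (Suc j) * (t - s)"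
  shows "is_singular_values p (\<lambda>i l. E i \<bullet> F l) (\<lambda>l. if l < p then cos (a (Suc l) * (t - s)) else 0)"
proof -
  define w where "w u m = cos (a (Suc m) * u) *\<^sub>R e (Suc m) + sin (a (Suc m) * u) *\<^sub>R f (Suc m)" for u m
  define c where "c m = cos (a (Suc m) * (t - s))" for m
  have ww: "w u m \<bullet> w u' n = (if m = n then cos (a (Suc m) * (u' - u)) else 0)"
    if "m < p" "n < p" for u u' m n
  proof -
    have h: "e (Suc m) \<bullet> e (Suc n) = (if m = n then 1 else 0)" "f (Suc m) \<bullet> f (Suc n) = (if m = n then 1 else 0)"
      "e (Suc m) \<bullet> f (Suc n) = 0" "f (Suc m) \<bullet> e (Suc n) = 0"
      using ef that by (auto simp: inner_commute)
    have "w u m \<bullet> w u' n = cos (a (Suc m) * u) * cos (a (Suc n) * u') * (e (Suc m) \<bullet> e (Suc n))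
       + sin (a (Suc m) * u) * sin (a (Suc n) * u') * (f (Suc m) \<bullet> f (Suc n))
       + cos (a (Suc m) * u) * sin (a (Suc n) * u') * (e (Suc m) \<bullet> f (Suc n))
       + sin (a (Suc m) * u) * cos (a (Suc n) * u') * (f (Suc m) \<bullet> e (Suc n))"
      unfolding w_def by (simp add: inner_add_left inner_add_right algebra_simps)
    also have "\<dots> = (if m = n then cos (a (Suc m) * u') * cos (a (Suc m) * u) + sin (a (Suc m) * u') * sin (a (Suc m) * u) else 0)"
      unfolding h by simp
    also have "\<dots> = (if m = n then cos (a (Suc m) * (u' - u)) else 0)"
      by (simp add: cos_diff right_diff_distrib)
    finally show ?thesis .
  qed
  have Hspan: "H_curve p a e f u = span (w u ` {..<p})" for u
  proof -
    have "(\<lambda>j. cos (a j * u) *\<^sub>R e j + sin (a j * u) *\<^sub>R f j) ` {1..p}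
        = (\<lambda>j. cos (a j * u) *\<^sub>R e j + sin (a j * u) *\<^sub>R f j) ` (Suc ` {..<p})"
      by (simp add: image_Suc_lessThan)
    also have "\<dots> = w u ` {..<p}" by (simp add: image_image w_def)
    finally show ?thesis unfolding H_curve_def by simp
  qed
  have won: "\<forall>i<p. \<forall>j<p. w u i \<bullet> w u j = (if i = j then 1 else 0)" for u
    using ww by simp
  from E have Eon: "\<forall>i<p. \<forall>j<p. E i \<bullet> E j = (if i = j then 1 else 0)"
    and Esp: "span (E ` {..<p}) = span (w s ` {..<p})"
    unfolding orthonormal_basis_of_def Hspan by auto
  from F have Fon: "\<forall>i<p. \<forall>j<p. F i \<bullet> F j = (if i = j then 1 else 0)"
    and Fsp: "span (F ` {..<p}) = span (w t ` {..<p})"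
    unfolding orthonormal_basis_of_def Hspan by auto
  have Eexp: "E i = (\<Sum>m<p. (E i \<bullet> w s m) *\<^sub>R w s m)" if "i < p" for i
    by (rule ortho_expand[OF won]) (metis Esp that lessThan_iff imageI span_base)
  have Fexp: "F i = (\<Sum>m<p. (F i \<bullet> w t m) *\<^sub>R w t m)" if "i < p" for i
    by (rule ortho_expand[OF won]) (metis Fsp that lessThan_iff imageI span_base)
  have wEexp: "w s m = (\<Sum>l<p. (w s m \<bullet> E l) *\<^sub>R E l)" if "m < p" for m
    by (rule ortho_expand[OF Eon]) (metis Esp that lessThan_iff imageI span_base)
  have wFexp: "w t m = (\<Sum>l<p. (w t m \<bullet> F l) *\<^sub>R F l)" if "m < p" for m
    by (rule ortho_expand[OF Fon]) (metis Fsp that lessThan_iff imageI span_base)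
  define U where "U i m = E i \<bullet> w s m" for i m
  define V where "V i m = F i \<bullet> w t m" for i m
  have Uo: "(\<Sum>l<p. U l i * U l j) = (if i = j then 1 else 0)" if "i < p" "j < p" for i j
  proof -
    have "w s i \<bullet> w s j = w s i \<bullet> (\<Sum>l<p. (w s j \<bullet> E l) *\<^sub>R E l)" using wEexp[OF that(2)] by simp
    also have "\<dots> = (\<Sum>l<p. U l i * U l j)"
      by (simp add: inner_sum_right U_def inner_commute mult.commute)
    finally show ?thesis using won[of s] that by simp
  qed
  have Vo: "(\<Sum>l<p. V l i * V l j) = (if i = j then 1 else 0)" if "i < p" "j < p" for i j
  proof -
    have "w t i \<bullet> w t j = w t i \<bullet> (\<Sum>l<p. (w t j \<bullet> F l) *\<^sub>R F l)" using wFexp[OF that(2)] by simp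
    also have "\<dots> = (\<Sum>l<p. V l i * V l j)"
      by (simp add: inner_sum_right V_def inner_commute mult.commute)
    finally show ?thesis using won[of t] that by simp
  qed
  have Ew: "E i \<bullet> w t n = U i n * c n" if "i < p" "n < p" for i n
  proof -
    have "E i \<bullet> w t n = (\<Sum>m<p. U i m * (w s m \<bullet> w t n))"
      by (subst Eexp[OF that(1)]) (simp add: inner_sum_left U_def)
    also have "\<dots> = (\<Sum>m<p. if m = n then U i m * c m else 0)"
      by (rule sum.cong) (use that ww in \<open>auto simp: c_def\<close>)
    also have "\<dots> = U i n * c n" using that by (simp add: sum.delta')
    finally show ?thesis .
  qed
  have Ao: "E i \<bullet> F l = (\<Sum>n<p. U i n * (if n < p then c n else 0) * V l n)" if "i < p" "l < p" for i l
  proof -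
    have "E i \<bullet> F l = (\<Sum>n<p. V l n * (E i \<bullet> w t n))"
      by (subst Fexp[OF that(2)]) (simp add: inner_sum_right V_def)
    also have "\<dots> = (\<Sum>n<p. U i n * (if n < p then c n else 0) * V l n)"
      by (rule sum.cong) (use that Ew in auto)
    finally show ?thesis .
  qed
  have nonneg: "\<forall>i<p. 0 \<le> (if i < p then c i else 0)"
    using rng by (auto simp: c_def intro!: cos_ge_zero)
  have srt: "\<forall>i j. i < j \<and> j < p \<longrightarrow> (if j < p then c j else 0) \<le> (if i < p then c i else 0)"
  proof (intro allI impI)
    fix i j assume ij: "i < j \<and> j < p"
    have "cos (a (Suc j) * (t - s)) \<le> cos (a (Suc i) * (t - s))"
      by (rule cos_monotone_0_pi_le) (use rng mono ij in \<open>auto intro: order.trans\<close>)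
    then show "(if j < p then c j else 0) \<le> (if i < p then c i else 0)" using ij by (simp add: c_def)
  qed
  have ex: "\<exists>U V. (\<forall>i<p. \<forall>j<p. (\<Sum>l<p. U l i * U l j) = (if i = j then 1 else 0)) \<and>
            (\<forall>i<p. \<forall>j<p. (\<Sum>l<p. V l i * V l j) = (if i = j then 1 else 0)) \<and>
            (\<forall>i<p. \<forall>j<p. E i \<bullet> F j = (\<Sum>l<p. U i l * (if l < p then c l else 0) * V j l))"
    by (rule exI[of _ U], rule exI[of _ V]) (use Uo Vo Ao in auto)
  have "is_singular_values p (\<lambda>i l. E i \<bullet> F l) (\<lambda>l. if l < p then c l else 0)"
    unfolding is_singular_values_def
    by (intro conjI) (use nonneg srt ex in auto)
  then show ?thesis unfolding c_def by simp
qed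

lemma hcurve_basis:
  fixes e f :: "nat \<Rightarrow> real ^ 'n" and a :: "nat \<Rightarrow> real"
  assumes ef: "\<forall>i\<in>{1..p}. \<forall>j\<in>{1..p}. e i \<bullet> e j = (if i = j then 1 else 0) \<and>
                  f i \<bullet> f j = (if i = j then 1 else 0) \<and> e i \<bullet> f j = 0"
  shows "\<exists>E. orthonormal_basis_of p (H_curve p a e f u) E"
proof -
  define w where "w m = cos (a (Suc m) * u) *\<^sub>R e (Suc m) + sin (a (Suc m) * u) *\<^sub>R f (Suc m)" for m
  have ww: "w m \<bullet> w n = (if m = n then 1 else 0)" if "m < p" "n < p" for m n
  proof -
    have h: "e (Suc m) \<bullet> e (Suc n) = (if m = n then 1 else 0)" "f (Suc m) \<bullet> f (Suc n) = (if m = n then 1 else 0)"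
      "e (Suc m) \<bullet> f (Suc n) = 0" "f (Suc m) \<bullet> e (Suc n) = 0"
      using ef that by (auto simp: inner_commute)
    have "w m \<bullet> w n = cos (a (Suc m) * u) * cos (a (Suc n) * u) * (e (Suc m) \<bullet> e (Suc n))
       + sin (a (Suc m) * u) * sin (a (Suc n) * u) * (f (Suc m) \<bullet> f (Suc n))
       + cos (a (Suc m) * u) * sin (a (Suc n) * u) * (e (Suc m) \<bullet> f (Suc n))
       + sin (a (Suc m) * u) * cos (a (Suc n) * u) * (f (Suc m) \<bullet> e (Suc n))"
      unfolding w_def by (simp add: inner_add_left inner_add_right algebra_simps)
    also have "\<dots> = (if m = n then (cos (a (Suc m) * u))^2 + (sin (a (Suc m) * u))^2 else 0)"
      unfolding h by (simp add: power2_eq_square)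
    also have "\<dots> = (if m = n then 1 else 0)" by simp
    finally show ?thesis .
  qed
  have "(\<lambda>j. cos (a j * u) *\<^sub>R e j + sin (a j * u) *\<^sub>R f j) ` {1..p}
      = (\<lambda>j. cos (a j * u) *\<^sub>R e j + sin (a j * u) *\<^sub>R f j) ` (Suc ` {..<p})"
    by (simp add: image_Suc_lessThan)
  also have "\<dots> = w ` {..<p}" by (simp add: image_image w_def)
  finally have "H_curve p a e f u = span (w ` {..<p})" unfolding H_curve_def by simp
  then have "orthonormal_basis_of p (H_curve p a e f u) w"
    unfolding orthonormal_basis_of_def using ww by simp
  then show ?thesis by blast
qed

lemma frame_props:
  assumes frame: "is_orthonormal_frame p q e f r" and pq: "p \<le> q"
  shows "\<forall>i\<in>{1..p}. \<forall>j\<in>{1..p}. e i \<bullet> e j = (if i = j then 1 else 0) \<and>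
                  f i \<bullet> f j = (if i = j then 1 else 0) \<and> e i \<bullet> f j = 0"
proof (intro ballI conjI)
  fix i j assume i: "i \<in> {1..p}" and j: "j \<in> {1..p}"
  have F: "\<And>x y. x \<in> {1..p+q} \<Longrightarrow> y \<in> {1..p+q} \<Longrightarrow>
      frame_fam p e f r x \<bullet> frame_fam p e f r y = (if x = y then 1 else 0)"
    using frame unfolding is_orthonormal_frame_def by blast
  have fe: "frame_fam p e f r x = e x" if "x \<in> {1..p}" for x using that by (simp add: frame_fam_def)
  have ff: "frame_fam p e f r (p + x) = f x" if "x \<in> {1..p}" for x using that by (simp add: frame_fam_def)
  show "e i \<bullet> e j = (if i = j then 1 else 0)"
    using F[of i j] i j pq by (simp add: fe)
  show "f i \<bullet> f j = (if i = j then 1 else 0)"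
    using F[of "p + i" "p + j"] i j pq by (simp add: ff)
  show "e i \<bullet> f j = 0"
    using F[of i "p + j"] i j pq fe[OF i] ff[OF j] by simp
qed

lemma angle_eq:
  fixes e f :: "nat \<Rightarrow> real ^ 'n" and a :: "nat \<Rightarrow> real"
  assumes ef: "\<forall>i\<in>{1..p}. \<forall>j\<in>{1..p}. e i \<bullet> e j = (if i = j then 1 else 0) \<and>
                  f i \<bullet> f j = (if i = j then 1 else 0) \<and> e i \<bullet> f j = 0"
    and a_nonneg: "0 \<le> a 1"
    and a_mono: "\<And>i j. 1 \<le> i \<Longrightarrow> i \<le> j \<Longrightarrow> j \<le> p \<Longrightarrow> a i \<le> a j"
    and st: "s < t" and near: "sufficiently_near p a s t"
    and j: "j \<in> {1..p}"
  shows "jordan_angle p j (H_curve p a e f s) (H_curve p a e f t) = a j * (t - s)"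
proof -
  define E where "E = (SOME E. orthonormal_basis_of p (H_curve p a e f s) E)"
  define F where "F = (SOME F. orthonormal_basis_of p (H_curve p a e f t) F)"
  have E: "orthonormal_basis_of p (H_curve p a e f s) E"
    unfolding E_def using hcurve_basis[OF ef] by (rule someI_ex)
  have F: "orthonormal_basis_of p (H_curve p a e f t) F"
    unfolding F_def using hcurve_basis[OF ef] by (rule someI_ex)
  have nearp: "a p * (t - s) \<le> pi / 2" using near st by (simp add: sufficiently_near_def abs_if)
  have rng: "\<forall>l<p. 0 \<le> a (Suc l) * (t - s) \<and> a (Suc l) * (t - s) \<le> pi / 2"
  proof (intro allI impI conjI)
    fix l assume l: "l < p"
    have "0 \<le> a (Suc l)" using a_nonneg a_mono[of 1 "Suc l"] l by auto
    then show "0 \<le> a (Suc l) * (t - s)" using st by simp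
    have "a (Suc l) * (t - s) \<le> a p * (t - s)"
      using a_mono[of "Suc l" p] l st by (intro mult_right_mono) auto
    then show "a (Suc l) * (t - s) \<le> pi / 2" using nearp by simp
  qed
  have mono: "\<forall>i j. i < j \<longrightarrow> j < p \<longrightarrow> a (Suc i) * (t - s) \<le> a (Suc j) * (t - s)"
    using a_mono st by (auto intro!: mult_right_mono)
  have sv: "singular_values p (\<lambda>i l. E i \<bullet> F l) = (\<lambda>l. if l < p then cos (a (Suc l) * (t - s)) else 0)"
    by (rule singular_values_eq[OF hcurve_sv[OF ef E F rng mono]])
  have jj: "Suc (j - 1) = j" "j - 1 < p" using j by auto
  have "jordan_angle p j (H_curve p a e f s) (H_curve p a e f t) = arccos (cos (a j * (t - s)))"
    unfolding jordan_angle_def Let_def E_def[symmetric] F_def[symmetric] sv using jj by simp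
  also have "\<dots> = a j * (t - s)"
  proof -
    have r: "0 \<le> a j * (t - s) \<and> a j * (t - s) \<le> pi / 2"
      using rng jj by metis
    show ?thesis using r pi_gt_zero by (intro arccos_cos) linarith+
  qed
  finally show ?thesis .
qed

theorem lemma12:
  fixes p q :: nat and a :: "nat \<Rightarrow> real"
    and e f r :: "nat \<Rightarrow> real ^ 'n"
    and s1 s2 s3 :: real
  assumes dim: "CARD('n) = p + q"
    and pq: "p \<le> q"
    and a_nonneg: "0 \<le> a 1"
    and a_mono: "\<And>i j. 1 \<le> i \<Longrightarrow> i \<le> j \<Longrightarrow> j \<le> p \<Longrightarrow> a i \<le> a j"
    and frame: "is_orthonormal_frame p q e f r"
    and s12: "s1 < s2" and s23: "s2 < s3"
    and near12: "sufficiently_near p a s1 s2"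
    and near13: "sufficiently_near p a s1 s3"
    and near23: "sufficiently_near p a s2 s3"
  shows "\<forall>j\<in>{1..p}.
    jordan_angle p j (H_curve p a e f s1) (H_curve p a e f s2)
    + jordan_angle p j (H_curve p a e f s2) (H_curve p a e f s3)
    = jordan_angle p j (H_curve p a e f s1) (H_curve p a e f s3)"
proof
  fix j assume j: "j \<in> {1..p}"
  note ef = frame_props[OF frame pq]
  show "jordan_angle p j (H_curve p a e f s1) (H_curve p a e f s2)
    + jordan_angle p j (H_curve p a e f s2) (H_curve p a e f s3)
    = jordan_angle p j (H_curve p a e f s1) (H_curve p a e f s3)"
    using angle_eq[OF ef a_nonneg a_mono s12 near12 j] angle_eq[OF ef a_nonneg a_mono s23 near23 j]
      angle_eq[OF ef a_nonneg a_mono _ near13 j] s12 s23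
    by (simp add: algebra_simps)
qed

end
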